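(* Let $(p_t)_{t\ge0}$ be the laws of the Ornstein--Uhlenbeck process $dX_t=-X_t\,dt+\sqrt2\,dB_t$ started from a norm-subgaussian random vector $X_0=X\sim p$ in $\mathbb{R}^d$. Fix $0<\delta<1$ and take $T_1\ge\log\big(\frac{16}{\delta}d(\|X\|_{\psi_2}+1)\big)$. Then for all $x\in\mathbb{R}^d$ and $i\in\{1,\dots,d\}$, $$\big|-x_i-\partial_i\log p_{T_1}(x)\big|\le\frac{\delta}{2d}(1+\|x\|).$$
   Context: $\|X\|_{\psi_2}:=\inf\{t>0:\mathbb{E}[e^{\|X\|^2/t^2}]\le2\}$; $X$ is norm-subgaussian if this is finite. $p_{T_1}$ denotes the Lebesgue density of the law of $X_{T_1}$. *)

theory Defs
  imports "HOL-Probability.Probability"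
begin

text \<open>The expectation is taken as a
  nonnegative (extended) integral so that it is always defined.\<close>
definition psi2_norm :: "'a measure \<Rightarrow> ('a \<Rightarrow> 'b::real_normed_vector) \<Rightarrow> real" where
  "psi2_norm M X = Inf {t::real. t > 0 \<and>
      (\<integral>\<^sup>+ \<omega>. ennreal (exp ((norm (X \<omega>))\<^sup>2 / t\<^sup>2)) \<partial>M) \<le> 2}"

definition norm_subgaussian :: "'a measure \<Rightarrow> ('a \<Rightarrow> 'b::real_normed_vector) \<Rightarrow> bool" where
  "norm_subgaussian M X \<longleftrightarrow> (\<exists>t>0.
      (\<integral>\<^sup>+ \<omega>. ennreal (exp ((norm (X \<omega>))\<^sup>2 / t\<^sup>2)) \<partial>M) \<le> 2)"

definition gauss_dens :: "real \<Rightarrow> real ^ 'n \<Rightarrow> real" where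
  "gauss_dens s y = (2 * pi * s) powr (- real CARD('n) / 2) * exp (- (norm y)\<^sup>2 / (2 * s))"

text \<open>Lebesgue density of the law p_t of the Ornstein--Uhlenbeck process
  dX_t = -X_t dt + sqrt 2 dB_t at time t > 0, started at X_0 = X.  Since
  X_t = e^{-t} X_0 + sqrt(1 - e^{-2t}) Z with Z ~ N(0,I_d) independent of X_0,
  its (continuous version of the) density is
  p_t(x) = E[ gauss_dens (1 - e^{-2t}) (x - e^{-t} X_0) ].\<close>
definition ou_density :: "'a measure \<Rightarrow> ('a \<Rightarrow> real ^ 'n) \<Rightarrow> real \<Rightarrow> real ^ 'n \<Rightarrow> real" where
  "ou_density M X t x = (\<integral> \<omega>. gauss_dens (1 - exp (-2 * t)) (x - exp (- t) *\<^sub>R X \<omega>) \<partial>M)"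

end

theory Submission
  imports Defs
begin


lemma lip_from_deriv:
  fixes g g' :: "real \<Rightarrow> real"
  assumes "\<And>h. (g has_real_derivative g' h) (at h)" and "\<And>h. \<bar>g' h\<bar> \<le> C"
  shows "\<bar>g b - g a\<bar> \<le> C * \<bar>b - a\<bar>"
proof -
  have *: "\<bar>g v - g u\<bar> \<le> C * \<bar>v - u\<bar>" if uv: "u < v" for u v
  proof -
    obtain z where "g v - g u = (v - u) * g' z" using MVT2[OF uv, of g g'] assms(1) by blast
    then have "\<bar>g v - g u\<bar> = \<bar>v - u\<bar> * \<bar>g' z\<bar>" by (simp add: abs_mult)
    also have "\<dots> \<le> \<bar>v - u\<bar> * C" using assms(2) by (intro mult_left_mono) auto
    finally show ?thesis by (simp add: mult.commute)
  qed
  consider "a < b" | "a = b" | "b < a" by linarith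
  then show ?thesis
  proof cases
    case 3 from *[OF this] show ?thesis by (simp add: abs_minus_commute)
  qed (use * in auto)
qed

lemma deriv_integral:
  fixes f f' :: "real \<Rightarrow> 'a \<Rightarrow> real" and M :: "'a measure"
  assumes fm: "finite_measure M"
  and meas: "\<And>h. f h \<in> borel_measurable M"
  and meas': "f' 0 \<in> borel_measurable M"
  and der: "\<And>h \<omega>. \<omega> \<in> space M \<Longrightarrow> ((\<lambda>h. f h \<omega>) has_real_derivative f' h \<omega>) (at h)"
  and bnd: "\<And>h \<omega>. \<omega> \<in> space M \<Longrightarrow> \<bar>f' h \<omega>\<bar> \<le> C"
  and int0: "integrable M (f 0)"
  shows "((\<lambda>h. \<integral>\<omega>. f h \<omega> \<partial>M) has_real_derivative (\<integral>\<omega>. f' 0 \<omega> \<partial>M)) (at 0)"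
proof -
  interpret finite_measure M by fact
  have lip: "\<bar>f b \<omega> - f a \<omega>\<bar> \<le> C * \<bar>b - a\<bar>" if "\<omega> \<in> space M" for a b \<omega>
    by (rule lip_from_deriv[of "\<lambda>h. f h \<omega>" "\<lambda>h. f' h \<omega>"]) (use der bnd that in auto)
  have intf: "integrable M (f h)" for h
  proof (rule Bochner_Integration.integrable_bound)
    show "integrable M (\<lambda>\<omega>. \<bar>f 0 \<omega>\<bar> + C * \<bar>h\<bar>)" using int0 by auto
    show "f h \<in> borel_measurable M" by (rule meas)
    show "AE \<omega> in M. norm (f h \<omega>) \<le> norm (\<bar>f 0 \<omega>\<bar> + C * \<bar>h\<bar>)"
    proof (rule AE_I2)
      fix \<omega> assume w: "\<omega> \<in> space M"
      have "0 \<le> C" using bnd[OF w, of 0] by linarith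
      then show "norm (f h \<omega>) \<le> norm (\<bar>f 0 \<omega>\<bar> + C * \<bar>h\<bar>)" using lip[OF w, of 0 h] by simp
    qed
  qed
  show ?thesis unfolding has_field_derivative_iff tendsto_at_iff_sequentially
  proof (intro allI impI)
    fix S :: "nat \<Rightarrow> real" assume S: "\<forall>i. S i \<in> UNIV - {0}" "S \<longlonglongrightarrow> 0"
    have eq: "((\<lambda>y. ((\<integral>\<omega>. f y \<omega> \<partial>M) - (\<integral>\<omega>. f 0 \<omega> \<partial>M)) / (y - 0)) \<circ> S) n
        = (\<integral>\<omega>. (f (S n) \<omega> - f 0 \<omega>) / S n \<partial>M)" for n
      using intf by (simp add: integral_diff)
    show "((\<lambda>y. ((\<integral>\<omega>. f y \<omega> \<partial>M) - (\<integral>\<omega>. f 0 \<omega> \<partial>M)) / (y - 0)) \<circ> S) \<longlonglongrightarrow> (\<integral>\<omega>. f' 0 \<omega> \<partial>M)"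
      unfolding eq
    proof (rule integral_dominated_convergence[where w="\<lambda>_. C"])
      show "f' 0 \<in> borel_measurable M" by (rule meas')
      show "(\<lambda>\<omega>. (f (S n) \<omega> - f 0 \<omega>) / S n) \<in> borel_measurable M" for n
        using meas by measurable
      show "integrable M (\<lambda>_. C)" by simp
      show "AE \<omega> in M. (\<lambda>n. (f (S n) \<omega> - f 0 \<omega>) / S n) \<longlonglongrightarrow> f' 0 \<omega>"
      proof (rule AE_I2)
        fix \<omega> assume w: "\<omega> \<in> space M"
        have "((\<lambda>y. (f y \<omega> - f 0 \<omega>) / (y - 0)) \<longlongrightarrow> f' 0 \<omega>) (at 0)"
          using der[OF w, of 0] unfolding has_field_derivative_iff by simp
        then have "((\<lambda>y. (f y \<omega> - f 0 \<omega>) / (y - 0)) \<circ> S) \<longlonglongrightarrow> f' 0 \<omega>"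
          using S unfolding tendsto_at_iff_sequentially by blast
        then show "(\<lambda>n. (f (S n) \<omega> - f 0 \<omega>) / S n) \<longlonglongrightarrow> f' 0 \<omega>" by (simp add: comp_def)
      qed
      show "AE \<omega> in M. norm ((f (S n) \<omega> - f 0 \<omega>) / S n) \<le> C" for n
      proof (rule AE_I2)
        fix \<omega> assume w: "\<omega> \<in> space M"
        have "S n \<noteq> 0" using S by auto
        then show "norm ((f (S n) \<omega> - f 0 \<omega>) / S n) \<le> C"
          using lip[OF w, of 0 "S n"] by (simp add: divide_le_eq abs_divide)
      qed
    qed
  qed
qed



lemma pointwise_bound:
  fixes nX t y w :: real
  assumes "0 \<le> nX" "0 < t" "1 \<le> y" "0 \<le> w" "w \<le> 1"
  shows "nX * w \<le> 2 * y * t * w + t * exp (- 2 * y\<^sup>2) * exp (nX\<^sup>2 / t\<^sup>2)"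
proof (cases "nX \<le> 2 * y * t")
  case True
  have "nX * w \<le> 2 * y * t * w" using True assms by (intro mult_right_mono) auto
  moreover have "0 \<le> t * exp (- 2 * y\<^sup>2) * exp (nX\<^sup>2 / t\<^sup>2)" using assms by simp
  ultimately show ?thesis by linarith
next
  case False
  define u where "u = nX / t"
  have nX: "nX = t * u" using assms unfolding u_def by simp
  have u2: "u > 2 * y" using False assms unfolding u_def by (simp add: field_simps)
  have "u\<^sup>2 \<ge> (2*y)\<^sup>2" using u2 assms by (intro power_mono) auto
  then have uy: "u\<^sup>2 - 2 * y\<^sup>2 \<ge> u\<^sup>2 / 2" by (simp add: power_mult_distrib)
  have "u \<le> 1 + u\<^sup>2 / 2" using sum_power2_ge_zero[of "u - 1" 0] by (simp add: power2_diff algebra_simps) 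
  also have "\<dots> \<le> exp (u\<^sup>2 / 2)" by (rule exp_ge_add_one_self)
  also have "\<dots> \<le> exp (u\<^sup>2 - 2 * y\<^sup>2)" using uy by simp
  also have "\<dots> = exp (- 2 * y\<^sup>2) * exp (nX\<^sup>2 / t\<^sup>2)"
    by (simp add: u_def power_divide flip: exp_add)
  finally have "u \<le> exp (- 2 * y\<^sup>2) * exp (nX\<^sup>2 / t\<^sup>2)" .
  then have "nX \<le> t * (exp (- 2 * y\<^sup>2) * exp (nX\<^sup>2 / t\<^sup>2))" unfolding nX
    using assms by (intro mult_left_mono) auto
  moreover have "nX * w \<le> nX" using assms by (simp add: mult_left_le)
  moreover have "0 \<le> 2 * y * t * w" using assms by simp
  ultimately show ?thesis by (smt (verit) mult.assoc)
qed

lemma posterior_bound: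
  fixes M :: "'a measure" and X :: "'a \<Rightarrow> real ^ 'n" and x :: "real ^ 'n"
  assumes P: "prob_space M" and Xm: "X \<in> borel_measurable M"
    and t: "0 < t" and Et: "(\<integral>\<^sup>+ \<omega>. ennreal (exp ((norm (X \<omega>))\<^sup>2 / t\<^sup>2)) \<partial>M) \<le> 2"
    and a: "0 \<le> a" "a * t \<le> 1/16" and s: "1/2 \<le> s"
  defines "w \<equiv> \<lambda>\<omega>. exp (- (norm (x - a *\<^sub>R X \<omega>))\<^sup>2 / (2 * s))"
  shows "integrable M w" "integrable M (\<lambda>\<omega>. norm (X \<omega>) * w \<omega>)"
    "0 < (\<integral>\<omega>. w \<omega> \<partial>M)"
    "(\<integral>\<omega>. norm (X \<omega>) * w \<omega> \<partial>M) \<le> 4 * (1 + norm x) * t * (\<integral>\<omega>. w \<omega> \<partial>M)"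
proof -
  interpret prob_space M by fact
  define y where "y = 1 + norm x"
  have y1: "1 \<le> y" unfolding y_def by simp
  define E where "E = (\<lambda>\<omega>. exp ((norm (X \<omega>))\<^sup>2 / t\<^sup>2))"
  have [measurable]: "X \<in> borel_measurable M" by fact
  have Em[measurable]: "E \<in> borel_measurable M" unfolding E_def by measurable
  have wm[measurable]: "w \<in> borel_measurable M" unfolding w_def by measurable
  have w01: "0 \<le> w \<omega>" "w \<omega> \<le> 1" for \<omega> unfolding w_def using s by auto
  have Efin: "(\<integral>\<^sup>+ \<omega>. ennreal (E \<omega>) \<partial>M) < \<infinity>" using Et unfolding E_def
    by (simp add: order_le_less_trans[OF _ ennreal_numeral_less_top])
  have Eint: "integrable M E"
    using Efin by (intro integrableI_nonneg) (auto simp: E_def)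
  have EI: "(\<integral>\<omega>. E \<omega> \<partial>M) \<le> 2"
  proof -
    have "ennreal (\<integral>\<omega>. E \<omega> \<partial>M) = (\<integral>\<^sup>+ \<omega>. ennreal (E \<omega>) \<partial>M)"
      using Eint by (intro nn_integral_eq_integral[symmetric]) (auto simp: E_def)
    also have "\<dots> \<le> 2" using Et unfolding E_def .
    finally show ?thesis by (metis ennreal_le_iff ennreal_numeral zero_le_numeral)
  qed
  show wint: "integrable M w"
    by (rule integrable_const_bound[where B=1]) (use w01 in auto)
  have nX2: "(norm (X \<omega>))\<^sup>2 \<le> t\<^sup>2 * E \<omega>" for \<omega>
  proof -
    have "(norm (X \<omega>))\<^sup>2 / t\<^sup>2 \<le> E \<omega>" unfolding E_def
      using exp_ge_add_one_self[of "(norm (X \<omega>))\<^sup>2 / t\<^sup>2"] by (smt (verit) zero_le_divide_iff zero_le_power2)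
    then show ?thesis using t by (simp add: divide_le_eq mult.commute)
  qed
  have nX2int: "integrable M (\<lambda>\<omega>. (norm (X \<omega>))\<^sup>2)"
    by (rule Bochner_Integration.integrable_bound[OF integrable_mult_right[OF Eint, of "t\<^sup>2"]])
       (use nX2 in \<open>auto simp: E_def\<close>)
  have nX2I: "(\<integral>\<omega>. (norm (X \<omega>))\<^sup>2 \<partial>M) \<le> 2 * t\<^sup>2"
  proof -
    have "(\<integral>\<omega>. (norm (X \<omega>))\<^sup>2 \<partial>M) \<le> (\<integral>\<omega>. t\<^sup>2 * E \<omega> \<partial>M)"
      by (intro integral_mono nX2int integrable_mult_right Eint nX2)
    also have "\<dots> \<le> t\<^sup>2 * 2" using EI by (simp add: mult_left_mono)
    finally show ?thesis by simp
  qed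
  define Q where "Q = (\<lambda>\<omega>. (norm (x - a *\<^sub>R X \<omega>))\<^sup>2)"
  have Qm[measurable]: "Q \<in> borel_measurable M" unfolding Q_def by measurable
  have Qb: "Q \<omega> \<le> 2 * (norm x)\<^sup>2 + 2 * a\<^sup>2 * (norm (X \<omega>))\<^sup>2" for \<omega>
  proof -
    have "norm (x - a *\<^sub>R X \<omega>) \<le> norm x + a * norm (X \<omega>)"
      using norm_triangle_ineq4[of x "a *\<^sub>R X \<omega>"] a by simp
    then have "Q \<omega> \<le> (norm x + a * norm (X \<omega>))\<^sup>2" unfolding Q_def
      by (intro power_mono) auto
    also have "\<dots> \<le> 2 * (norm x)\<^sup>2 + 2 * a\<^sup>2 * (norm (X \<omega>))\<^sup>2"
      using sum_power2_ge_zero[of "norm x - a * norm (X \<omega>)" 0]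
      by (simp add: power2_eq_square algebra_simps)
    finally show ?thesis .
  qed
  have Qint: "integrable M Q"
    by (rule Bochner_Integration.integrable_bound[where f="\<lambda>\<omega>. 2 * (norm x)\<^sup>2 + 2 * a\<^sup>2 * (norm (X \<omega>))\<^sup>2"])
       (use nX2int Qb in \<open>auto simp: Q_def\<close>)
  have QI: "(\<integral>\<omega>. Q \<omega> \<partial>M) \<le> 2 * y\<^sup>2"
  proof -
    have "(\<integral>\<omega>. Q \<omega> \<partial>M) \<le> (\<integral>\<omega>. 2 * (norm x)\<^sup>2 + 2 * a\<^sup>2 * (norm (X \<omega>))\<^sup>2 \<partial>M)"
      by (intro integral_mono Qint Qb) (use nX2int in auto)
    also have "\<dots> = 2 * (norm x)\<^sup>2 + 2 * a\<^sup>2 * (\<integral>\<omega>. (norm (X \<omega>))\<^sup>2 \<partial>M)"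
      using nX2int by (simp add: prob_space)
    also have "\<dots> \<le> 2 * (norm x)\<^sup>2 + 2 * a\<^sup>2 * (2 * t\<^sup>2)"
      using nX2I by (intro add_left_mono mult_left_mono) auto
    also have "\<dots> \<le> 2 * y\<^sup>2"
    proof -
      have "(a * t)\<^sup>2 \<le> (1/16)\<^sup>2" using a t by (intro power_mono) auto
      then have "a\<^sup>2 * t\<^sup>2 \<le> 1/256" by (simp add: power_mult_distrib power_divide)
      moreover have "(norm x)\<^sup>2 + 1 \<le> y\<^sup>2" unfolding y_def by (simp add: power2_eq_square algebra_simps)
      ultimately show ?thesis by (simp add: algebra_simps)
    qed
    finally show ?thesis .
  qed
  have Wlow: "exp (- 2 * y\<^sup>2) \<le> (\<integral>\<omega>. w \<omega> \<partial>M)"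
  proof -
    have "exp (- 2 * y\<^sup>2) \<le> exp (expectation (\<lambda>\<omega>. - Q \<omega> / (2 * s)))"
    proof -
      have "expectation (\<lambda>\<omega>. - Q \<omega> / (2 * s)) = - (expectation Q) / (2 * s)"
        by simp
      moreover have "(expectation Q) / (2 * s) \<le> 2 * y\<^sup>2"
      proof -
        have "2 * y\<^sup>2 * 1 \<le> 2 * y\<^sup>2 * (2 * s)" using s by (intro mult_left_mono) auto
        then have "(expectation Q) \<le> 2 * y\<^sup>2 * (2 * s)" using QI by linarith
        then show ?thesis using s by (simp add: divide_le_eq)
      qed
      ultimately show ?thesis by simp
    qed
    also have "\<dots> \<le> expectation (\<lambda>\<omega>. exp (- Q \<omega> / (2 * s)))"
      using convex_on_exp[of 1]
      by (intro jensens_inequality[where I=UNIV]) (use Qint wint in \<open>auto simp: w_def Q_def\<close>)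
    also have "\<dots> = (\<integral>\<omega>. w \<omega> \<partial>M)" by (simp add: w_def Q_def)
    finally show ?thesis .
  qed
  then show Wpos: "0 < (\<integral>\<omega>. w \<omega> \<partial>M)" by (smt (verit) exp_gt_zero)
  have pb: "norm (X \<omega>) * w \<omega> \<le> 2 * y * t * w \<omega> + t * exp (- 2 * y\<^sup>2) * E \<omega>" for \<omega>
    unfolding E_def by (rule pointwise_bound[OF _ t y1 w01]) simp
  have pb0: "0 \<le> 2 * y * t * w \<omega> + t * exp (- 2 * y\<^sup>2) * E \<omega>" for \<omega>
    using w01[of \<omega>] t y1 by (simp add: E_def)
  show nXwint: "integrable M (\<lambda>\<omega>. norm (X \<omega>) * w \<omega>)"
  proof (rule Bochner_Integration.integrable_bound[where f="\<lambda>\<omega>. 2 * y * t * w \<omega> + t * exp (- 2 * y\<^sup>2) * E \<omega>"])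
    show "integrable M (\<lambda>\<omega>. 2 * y * t * w \<omega> + t * exp (- 2 * y\<^sup>2) * E \<omega>)"
      using wint Eint by auto
    show "(\<lambda>\<omega>. norm (X \<omega>) * w \<omega>) \<in> borel_measurable M" by measurable
    show "AE \<omega> in M. norm (norm (X \<omega>) * w \<omega>) \<le> norm (2 * y * t * w \<omega> + t * exp (- 2 * y\<^sup>2) * E \<omega>)"
      using pb pb0 w01 by (auto simp: abs_mult)
  qed
  have "(\<integral>\<omega>. norm (X \<omega>) * w \<omega> \<partial>M) \<le> (\<integral>\<omega>. 2 * y * t * w \<omega> + t * exp (- 2 * y\<^sup>2) * E \<omega> \<partial>M)"
    by (intro integral_mono nXwint) (use wint Eint pb in auto)
  also have "\<dots> = 2 * y * t * (\<integral>\<omega>. w \<omega> \<partial>M) + t * exp (- 2 * y\<^sup>2) * (\<integral>\<omega>. E \<omega> \<partial>M)"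
    using wint Eint by simp
  also have "\<dots> \<le> 2 * y * t * (\<integral>\<omega>. w \<omega> \<partial>M) + t * (\<integral>\<omega>. w \<omega> \<partial>M) * 2"
    using EI Wlow t Wpos by (intro add_left_mono mult_mono) (auto simp: E_def intro!: integral_nonneg_AE)
  also have "\<dots> \<le> 4 * y * t * (\<integral>\<omega>. w \<omega> \<partial>M)"
    using y1 t Wpos by (simp add: algebra_simps)
  finally show "(\<integral>\<omega>. norm (X \<omega>) * w \<omega> \<partial>M) \<le> 4 * (1 + norm x) * t * (\<integral>\<omega>. w \<omega> \<partial>M)"
    unfolding y_def .
qed

lemma final_arith:
  fixes a s W I xi nx t \<delta> d :: real
  assumes a: "0 \<le> a" "a \<le> \<delta> / (16 * d)" "a \<le> 1/16" "a * t \<le> \<delta> / (16 * d)"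
    and s: "s = 1 - a\<^sup>2" and W: "0 < W" and I: "\<bar>I\<bar> \<le> 4 * (1 + nx) * t * W"
    and xi: "\<bar>xi\<bar> \<le> nx" and d: "1 \<le> d" and \<delta>: "0 < \<delta>" and t: "0 < t"
  shows "\<bar>- xi - (- (xi * W - a * I) / (s * W))\<bar> \<le> \<delta> / (2 * d) * (1 + nx)"
proof -
  have a2: "a\<^sup>2 \<le> 1/256" using a power_mono[of a "1/16" 2] by (simp add: power_divide)
  have s34: "s \<ge> 3/4" using s a2 by simp
  have eq: "- xi - (- (xi * W - a * I) / (s * W)) = (xi * a\<^sup>2 - a * (I / W)) / s"
  proof -
    have sn: "1 - a\<^sup>2 \<noteq> 0" using s34 s by simp
    show ?thesis unfolding s using W sn by (simp add: field_simps)
  qed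
  have nx: "0 \<le> nx" using xi by linarith
  have IW: "\<bar>I / W\<bar> \<le> 4 * (1 + nx) * t" using I W by (simp add: abs_divide divide_le_eq)
  have "\<bar>xi * a\<^sup>2 - a * (I / W)\<bar> \<le> nx * a\<^sup>2 + a * (4 * (1 + nx) * t)"
  proof -
    have "\<bar>xi * a\<^sup>2\<bar> \<le> nx * a\<^sup>2" using xi by (simp add: abs_mult mult_right_mono)
    moreover have "\<bar>a * (I / W)\<bar> \<le> a * (4 * (1 + nx) * t)" unfolding abs_mult using IW a by (simp only: abs_of_nonneg[OF a(1)]) (intro mult_left_mono, auto)
    ultimately show ?thesis by linarith
  qed
  also have "\<dots> \<le> (1 + nx) * (\<delta> / (256 * d)) + (1 + nx) * (\<delta> / (4 * d))"
  proof -
    have "a\<^sup>2 \<le> \<delta> / (16 * d) * (1/16)" using a unfolding power2_eq_square by (intro mult_mono) auto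
    then have "nx * a\<^sup>2 \<le> (1 + nx) * (\<delta> / (256 * d))" using nx
      by (intro mult_mono) auto
    moreover have "a * (4 * (1 + nx) * t) = (1 + nx) * (4 * (a * t))" by (simp add: algebra_simps)
    moreover have "\<dots> \<le> (1 + nx) * (\<delta> / (4 * d))" using a nx by (intro mult_left_mono) auto
    ultimately show ?thesis by linarith
  qed
  also have "\<dots> = (1 + nx) * (\<delta> / d) * (65 / 256)" by (simp add: field_simps)
  finally have num: "\<bar>xi * a\<^sup>2 - a * (I / W)\<bar> \<le> (1 + nx) * (\<delta> / d) * (65 / 256)" .
  have "\<bar>(xi * a\<^sup>2 - a * (I / W)) / s\<bar> = \<bar>xi * a\<^sup>2 - a * (I / W)\<bar> / s" using s34 by (simp add: abs_divide)
  also have "\<dots> \<le> (1 + nx) * (\<delta> / d) * (65 / 256) / (3/4)"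
    using num s34 nx \<delta> d by (intro frac_le) auto
  also have "\<dots> \<le> \<delta> / (2 * d) * (1 + nx)" using nx \<delta> d by (simp add: field_simps)
  finally show ?thesis unfolding eq .
qed

lemma gauss_deriv_bound:
  fixes r N s :: real
  assumes "r\<^sup>2 \<le> N" "0 < s" "s \<le> 1"
  shows "\<bar>- r / s * exp (- N / (2 * s))\<bar> \<le> 3 / s"
proof -
  define u where "u = r\<^sup>2 / (2 * s)"
  have e1: "exp (- N / (2 * s)) \<le> exp (- u)" unfolding u_def using assms by (simp add: divide_right_mono)
  have "\<bar>r\<bar> \<le> 1 + r\<^sup>2" using sum_power2_ge_zero[of "\<bar>r\<bar> - 1" 0]
    by (simp add: power2_diff algebra_simps)
  have r2: "r\<^sup>2 * exp (- u) \<le> 2 * s"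
  proof -
    have "u \<le> exp u" using exp_ge_add_one_self[of u] by linarith
    then have "r\<^sup>2 \<le> 2 * s * exp u" unfolding u_def using assms(2) by (simp add: field_simps)
    then show ?thesis by (simp add: exp_minus field_simps)
  qed
  have "\<bar>r\<bar> * exp (- N / (2 * s)) \<le> (1 + r\<^sup>2) * exp (- u)"
    using \<open>\<bar>r\<bar> \<le> 1 + r\<^sup>2\<close> e1 by (intro mult_mono) auto
  also have "\<dots> = exp (- u) + r\<^sup>2 * exp (- u)" by (simp add: algebra_simps)
  also have "\<dots> \<le> 1 + 2 * s"
  proof -
    have "exp (- u) \<le> 1" unfolding u_def using assms(2) by simp
    then show ?thesis using r2 by linarith
  qed
  also have "\<dots> \<le> 3" using assms by simp
  finally have "\<bar>r\<bar> * exp (- N / (2 * s)) \<le> 3" .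
  then have "\<bar>r\<bar> * exp (- N / (2 * s)) / s \<le> 3 / s" using assms(2) by (intro divide_right_mono) auto
  then show ?thesis using assms(2) by (simp add: abs_mult abs_divide)
qed

theorem lemma12:
  fixes M :: "'a measure" and X :: "'a \<Rightarrow> real ^ 'n" and \<delta> T1 :: real
  assumes "prob_space M"
    and "X \<in> borel_measurable M"
    and "norm_subgaussian M X"
    and "0 < \<delta>" and "\<delta> < 1"
    and "T1 \<ge> ln (16 / \<delta> * real CARD('n) * (psi2_norm M X + 1))"
  shows "\<forall>(x::real ^ 'n) (i::'n). \<exists>D.
           ((\<lambda>h. ln (ou_density M X T1 (x + h *\<^sub>R axis i 1))) has_real_derivative D) (at 0)
           \<and> \<bar>- (x $ i) - D\<bar> \<le> \<delta> / (2 * real CARD('n)) * (1 + norm x)"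
proof (intro allI)
  fix x :: "real ^ 'n" and i :: 'n
  interpret P: prob_space M by fact
  have Xm[measurable]: "X \<in> borel_measurable M" by fact
  define S where "S = {t::real. t > 0 \<and> (\<integral>\<^sup>+ \<omega>. ennreal (exp ((norm (X \<omega>))\<^sup>2 / t\<^sup>2)) \<partial>M) \<le> 2}"
  have psi: "psi2_norm M X = Inf S" unfolding psi2_norm_def S_def ..
  have Sne: "S \<noteq> {}" using assms(3) unfolding norm_subgaussian_def S_def by auto
  have psi0: "0 \<le> psi2_norm M X" unfolding psi by (rule cInf_greatest[OF Sne]) (auto simp: S_def)
  obtain t where tS: "t \<in> S" and tlt: "t < psi2_norm M X + 1"
    using cInf_lessD[OF Sne, of "Inf S + 1"] psi by auto
  have t0: "0 < t" and Et: "(\<integral>\<^sup>+ \<omega>. ennreal (exp ((norm (X \<omega>))\<^sup>2 / t\<^sup>2)) \<partial>M) \<le> 2"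
    using tS by (auto simp: S_def)
  define d where "d = real CARD('n)"
  have d1: "1 \<le> d" unfolding d_def using zero_less_card_finite[where 'a='n] by linarith
  define a where "a = exp (- T1)"
  define s where "s = 1 - exp (-2 * T1)"
  have a0: "0 < a" unfolding a_def by simp
  have s_eq: "s = 1 - a\<^sup>2" unfolding s_def a_def by (simp add: power2_eq_square flip: exp_add)
  define \<psi> where "\<psi> = psi2_norm M X"
  define K where "K = 16 / \<delta> * d * (\<psi> + 1)"
  have K0: "0 < K" unfolding K_def using assms(4) d1 psi0 \<psi>_def by simp
  have "ln K \<le> T1" using assms(6) unfolding K_def d_def \<psi>_def .
  then have "K \<le> exp T1" using K0 by (metis exp_le_cancel_iff exp_ln)
  then have aK: "a \<le> 1 / K" unfolding a_def using K0 by (simp add: exp_minus field_simps)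
  have Kinv: "1 / K = \<delta> / (16 * d) / (\<psi> + 1)" unfolding K_def using assms(4) d1 psi0 \<psi>_def by (simp add: field_simps)
  have psi1: "1 \<le> \<psi> + 1" using psi0 \<psi>_def by simp
  have dd: "0 < \<delta> / (16 * d)" using assms(4) d1 by simp
  have a_d: "a \<le> \<delta> / (16 * d)"
  proof -
    have "\<delta> / (16 * d) * 1 \<le> \<delta> / (16 * d) * (\<psi> + 1)" using psi1 dd by (intro mult_left_mono) auto
    moreover have p1: "0 < \<psi> + 1" using psi1 by simp
    ultimately have "\<delta> / (16 * d) / (\<psi> + 1) \<le> \<delta> / (16 * d)" unfolding pos_divide_le_eq[OF p1] by simp
    then show ?thesis using aK Kinv by linarith
  qed
  have a16: "a \<le> 1/16"
  proof -
    have "\<delta> / (16 * d) \<le> 1 / 16" using assms(4,5) d1 by (simp add: divide_le_eq field_simps)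
    then show ?thesis using a_d by linarith
  qed
  have at: "a * t \<le> \<delta> / (16 * d)"
  proof -
    have "a * t \<le> a * (\<psi> + 1)" using tlt a0 \<psi>_def by simp
    also have "\<dots> \<le> 1 / K * (\<psi> + 1)" using aK psi1 by (intro mult_right_mono) auto
    also have "\<dots> = \<delta> / (16 * d)" using Kinv psi1 by simp
    finally show ?thesis .
  qed
  have a2: "a\<^sup>2 \<le> 1/256" using a0 a16 power_mono[of a "1/16" 2] by (simp add: power_divide)
  have s12: "1/2 \<le> s" "s \<le> 1" "0 < s" using s_eq a2 by auto
  define w where "w = (\<lambda>\<omega>. exp (- (norm (x - a *\<^sub>R X \<omega>))\<^sup>2 / (2 * s)))"
  have at16: "a * t \<le> 1/16"
  proof -
    have "\<delta> / (16 * d) \<le> 1 / 16" using assms(4,5) d1 by (simp add: divide_le_eq field_simps)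
    then show ?thesis using at by linarith
  qed
  have wd: "exp (- (norm (x - a *\<^sub>R X \<omega>))\<^sup>2 / (2 * s)) = w \<omega>" for \<omega> unfolding w_def ..
  note pb = posterior_bound[OF assms(1) Xm t0 Et less_imp_le[OF a0] at16 s12(1), where x=x, unfolded wd]
  have wint: "integrable M w" and nXwint: "integrable M (\<lambda>\<omega>. norm (X \<omega>) * w \<omega>)"
    and Wpos: "0 < (\<integral>\<omega>. w \<omega> \<partial>M)"
    and Wbd: "(\<integral>\<omega>. norm (X \<omega>) * w \<omega> \<partial>M) \<le> 4 * (1 + norm x) * t * (\<integral>\<omega>. w \<omega> \<partial>M)"
    using pb by (simp_all add: eta_contract_eq)
  have Xi_m[measurable]: "(\<lambda>\<omega>. X \<omega> $ i) \<in> borel_measurable M"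
    by (rule borel_measurable_continuous_on[where f="\<lambda>v. v $ i", OF _ Xm]) (auto intro: continuous_intros)
  define z where "z = (\<lambda>\<omega>. x $ i - a * X \<omega> $ i)"
  define N where "N = (\<lambda>\<omega>. (norm (x - a *\<^sub>R X \<omega>))\<^sup>2)"
  have Nm[measurable]: "N \<in> borel_measurable M" unfolding N_def by measurable
  have zm[measurable]: "z \<in> borel_measurable M" unfolding z_def by measurable
  define f where "f = (\<lambda>h \<omega>. exp (- (N \<omega> + 2 * h * z \<omega> + h\<^sup>2) / (2 * s)))"
  define f' where "f' = (\<lambda>h \<omega>. - (z \<omega> + h) / s * f h \<omega>)"
  have normexp: "(norm (x + h *\<^sub>R axis i 1 - a *\<^sub>R X \<omega>))\<^sup>2 = N \<omega> + 2 * h * z \<omega> + h\<^sup>2" for h \<omega>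
  proof -
    define v where "v = x - a *\<^sub>R X \<omega>"
    have e1: "x + h *\<^sub>R axis i 1 - a *\<^sub>R X \<omega> = v + h *\<^sub>R axis i 1" unfolding v_def by (simp add: algebra_simps)
    have e2: "v $ i = z \<omega>" unfolding v_def z_def by simp
    have e3: "(norm (v + h *\<^sub>R axis i 1))\<^sup>2 = (norm v)\<^sup>2 + 2 * h * v $ i + h\<^sup>2"
      unfolding power2_norm_eq_inner
      by (simp add: inner_add_left inner_add_right inner_axis inner_axis' inner_commute power2_eq_square algebra_simps)
    show ?thesis unfolding e1 N_def v_def[symmetric] e3 e2 ..
  qed
  have compi: "(x + h *\<^sub>R axis i 1 - a *\<^sub>R X \<omega>) $ i = z \<omega> + h" for h \<omega> unfolding z_def by simp
  define c where "c = (2 * pi * s) powr (- d / 2)"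
  have c0: "0 < c" unfolding c_def using s12 by simp
  have ou: "ou_density M X T1 (x + h *\<^sub>R axis i 1) = c * (\<integral>\<omega>. f h \<omega> \<partial>M)" for h
    unfolding ou_density_def s_def[symmetric] a_def[symmetric] gauss_dens_def normexp c_def d_def f_def
    by (simp add: algebra_simps)
  have f0: "f 0 = w" unfolding f_def w_def N_def by auto
  have fm: "f h \<in> borel_measurable M" for h unfolding f_def by measurable
  have f'm: "f' 0 \<in> borel_measurable M" unfolding f'_def using fm by measurable
  have der: "((\<lambda>h. f h \<omega>) has_real_derivative f' h \<omega>) (at h)" for h \<omega>
  proof -
    have "((\<lambda>h. - (N \<omega> + 2 * h * z \<omega> + h\<^sup>2) / (2 * s)) has_real_derivative (- (z \<omega> + h) / s)) (at h)"
      using s12 by (auto intro!: derivative_eq_intros simp: field_simps)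
    from DERIV_chain2[OF DERIV_exp this] show ?thesis unfolding f_def f'_def by (simp add: mult.commute)
  qed
  have bnd: "\<bar>f' h \<omega>\<bar> \<le> 3 / s" for h \<omega>
  proof -
    have "(z \<omega> + h)\<^sup>2 \<le> (norm (x + h *\<^sub>R axis i 1 - a *\<^sub>R X \<omega>))\<^sup>2"
      using component_le_norm_cart[of "x + h *\<^sub>R axis i 1 - a *\<^sub>R X \<omega>" i] unfolding compi
      by (metis abs_ge_zero power2_abs power_mono)
    then have "(z \<omega> + h)\<^sup>2 \<le> N \<omega> + 2 * h * z \<omega> + h\<^sup>2" unfolding normexp .
    from gauss_deriv_bound[OF this s12(3,2)] show ?thesis unfolding f'_def f_def .
  qed
  have Gder: "((\<lambda>h. \<integral>\<omega>. f h \<omega> \<partial>M) has_real_derivative (\<integral>\<omega>. f' 0 \<omega> \<partial>M)) (at 0)"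
    by (rule deriv_integral[OF P.finite_measure_axioms fm f'm der bnd]) (simp add: f0 wint)
  define W where "W = (\<integral>\<omega>. w \<omega> \<partial>M)"
  define I where "I = (\<integral>\<omega>. X \<omega> $ i * w \<omega> \<partial>M)"
  have wm[measurable]: "w \<in> borel_measurable M" using wint by auto
  have Xiwint: "integrable M (\<lambda>\<omega>. X \<omega> $ i * w \<omega>)"
    by (rule Bochner_Integration.integrable_bound[OF nXwint])
       (auto simp: abs_mult w_def intro!: mult_right_mono component_le_norm_cart)
  have f'0: "f' 0 \<omega> = - (x $ i * w \<omega> - a * (X \<omega> $ i * w \<omega>)) / s" for \<omega>
    unfolding f'_def f0 z_def by (simp add: algebra_simps)
  have If': "(\<integral>\<omega>. f' 0 \<omega> \<partial>M) = - (x $ i * W - a * I) / s"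
    unfolding f'0 W_def I_def using wint Xiwint by simp
  define D where "D = - (x $ i * W - a * I) / (s * W)"
  have G0: "(\<integral>\<omega>. f 0 \<omega> \<partial>M) = W" unfolding f0 W_def ..
  have "((\<lambda>h. ln (c * (\<integral>\<omega>. f h \<omega> \<partial>M))) has_real_derivative (1 / (c * W)) * (c * (- (x $ i * W - a * I) / s))) (at 0)"
    using DERIV_chain2[OF DERIV_ln_divide DERIV_cmult[OF Gder, of c]] c0 Wpos G0 If' unfolding W_def by simp
  moreover have "(1 / (c * W)) * (c * (- (x $ i * W - a * I) / s)) = D"
    unfolding D_def using c0 Wpos W_def s12 by (simp add: field_simps)
  ultimately have Dder: "((\<lambda>h. ln (ou_density M X T1 (x + h *\<^sub>R axis i 1))) has_real_derivative D) (at 0)"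
    unfolding ou by simp
  have Ibd: "\<bar>I\<bar> \<le> 4 * (1 + norm x) * t * W"
  proof -
    have "\<bar>I\<bar> \<le> (\<integral>\<omega>. \<bar>X \<omega> $ i * w \<omega>\<bar> \<partial>M)" unfolding I_def by (rule integral_abs_bound)
    also have "\<dots> \<le> (\<integral>\<omega>. norm (X \<omega>) * w \<omega> \<partial>M)"
      by (intro integral_mono nXwint integrable_abs Xiwint) (auto simp: abs_mult w_def intro!: mult_right_mono component_le_norm_cart)
    finally show ?thesis using Wbd unfolding W_def by linarith
  qed
  have "\<bar>- (x $ i) - D\<bar> \<le> \<delta> / (2 * d) * (1 + norm x)"
    unfolding D_def
    by (rule final_arith[OF less_imp_le[OF a0] a_d a16 at s_eq _ Ibd component_le_norm_cart d1 assms(4) t0])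
       (use Wpos W_def in simp)
  with Dder show "\<exists>D. ((\<lambda>h. ln (ou_density M X T1 (x + h *\<^sub>R axis i 1))) has_real_derivative D) (at 0) \<and> \<bar>- (x $ i) - D\<bar> \<le> \<delta> / (2 * real CARD('n)) * (1 + norm x)"
    unfolding d_def by blast
qed

end
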